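(* Let $d$ be a pseudo-metric on $[0,1]$ and $\Psi:\mathbb R_+\to\mathbb R_+$ continuous, strictly increasing with $\Psi(0)=0$, such that $F(1):=\mathcal V(\Psi,d)<\infty$. Then $$N([0,1],d,\varepsilon)\le\frac{4F(1)}{\Psi(\varepsilon)}\qquad\text{for all }0<\varepsilon<\Psi^{-1}(F(1)).$$ More generally, with $F(t)=\sup\sum_{i=1}^n\Psi(d(t_i,t_{i-1}))$ over partitions $0=t_0<\dots<t_n=t$, for every $m\in\mathbb Z$ and integer $j\ge1$ the set $S_{m,j}=\{s\in[0,1]:F(s)\in((j-1)2^{-m},j2^{-m}]\}$ satisfies $N(S_{m,j},d,\varepsilon)\le 2^{-m+2}/\Psi(\varepsilon)$ for $0<\varepsilon<\Psi^{-1}(2^{-m})$.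
   Context: $\mathcal V(\Psi,d)=\sup\sum_{i=1}^n\Psi(d(t_i,t_{i-1}))$ over all partitions $0=t_0<\dots<t_n=1$. For $A\subset[0,1]$, $N(A,d,\varepsilon)$ is the smallest number of open $d$-balls of radius $\varepsilon$ (centred in $A$) covering $A$. *)

theory Defs
  imports "HOL-Analysis.Analysis"
begin

definition pseudo_metric_on01 :: "(real \<Rightarrow> real \<Rightarrow> real) \<Rightarrow> bool" where
  "pseudo_metric_on01 d \<longleftrightarrow>
     (\<forall>x\<in>{0..1}. d x x = 0) \<and>
     (\<forall>x\<in>{0..1}. \<forall>y\<in>{0..1}. 0 \<le> d x y \<and> d x y = d y x) \<and>
     (\<forall>x\<in>{0..1}. \<forall>y\<in>{0..1}. \<forall>z\<in>{0..1}. d x z \<le> d x y + d y z)"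

definition partition_of :: "real \<Rightarrow> nat \<Rightarrow> (nat \<Rightarrow> real) \<Rightarrow> bool" where
  "partition_of t n p \<longleftrightarrow> p 0 = 0 \<and> p n = t \<and> (\<forall>i<n. p i < p (Suc i))"

text \<open>F(t) = sup over partitions of [0,t] of sum Psi(d(t_i,t_{i-1})), valued in ereal
  (so that an unbounded supremum is \<infinity>). F(1) is V(Psi,d).\<close>
definition varF :: "(real \<Rightarrow> real) \<Rightarrow> (real \<Rightarrow> real \<Rightarrow> real) \<Rightarrow> real \<Rightarrow> ereal" where
  "varF \<Psi> d t = (SUP (n, p) \<in> {(n, p). partition_of t n p}.
                   ereal (\<Sum>i\<in>{1..n}. \<Psi> (d (p i) (p (i - 1)))))"

text \<open>Covering number N(A,d,eps): least number of open d-balls of radius eps centred in A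
  covering A (\<infinity> if there is no finite such cover).\<close>
definition cover_num :: "real set \<Rightarrow> (real \<Rightarrow> real \<Rightarrow> real) \<Rightarrow> real \<Rightarrow> enat" where
  "cover_num A d \<epsilon> = (INF C \<in> {C. finite C \<and> C \<subseteq> A \<and> A \<subseteq> (\<Union>c\<in>C. {x. d c x < \<epsilon>})}.
                        enat (card C))"

end

theory Submission imports Defs begin

lemma varF_upper:
  "partition_of t n p \<Longrightarrow> ereal (\<Sum>i\<in>{1..n}. \<Psi> (d (p i) (p (i-1)))) \<le> varF \<Psi> d t"
  unfolding varF_def by (rule SUP_upper2[where i="(n,p)"]) auto

lemma varF_0: "0 \<le> varF \<Psi> d 0"
proof -
  have P: "partition_of 0 0 (\<lambda>_. 0)" by (simp add: partition_of_def)
  show ?thesis using varF_upper[OF P, of \<Psi> d] by (simp add: zero_ereal_def)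
qed

lemma varF_super:
  assumes pm: "pseudo_metric_on01 d" and st: "0 \<le> s" "s < t" "t \<le> 1"
  shows "varF \<Psi> d s + ereal (\<Psi> (d s t)) \<le> varF \<Psi> d t"
proof -
  let ?I = "{(n, p). partition_of s n p}"
  let ?f = "\<lambda>(n,p). ereal (\<Sum>i\<in>{1..n}. \<Psi> (d (p i) (p (i-1))))"
  have ne: "?I \<noteq> {}"
  proof (cases "s = 0")
    case True
    then have "(0, \<lambda>_. 0) \<in> ?I" by (simp add: partition_of_def)
    then show ?thesis by blast
  next
    case False
    then have "(1, \<lambda>i. if i = 0 then 0 else s) \<in> ?I" using st by (simp add: partition_of_def)
    then show ?thesis by blast
  qed
  have sym: "d t s = d s t" using pm st unfolding pseudo_metric_on01_def by auto
  have "varF \<Psi> d s + ereal (\<Psi> (d s t)) = (SUP x\<in>?I. ?f x + ereal (\<Psi> (d s t)))"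
    unfolding varF_def by (subst SUP_ereal_add_left[OF ne]) auto
  also have "\<dots> \<le> varF \<Psi> d t"
  proof (rule SUP_least, clarify)
    fix n p assume P: "partition_of s n p"
    define p' where "p' = p(Suc n := t)"
    have P': "partition_of t (Suc n) p'"
      using P st unfolding partition_of_def p'_def
      by (auto simp: less_Suc_eq)
    have eq: "(\<Sum>i\<in>{1..n}. \<Psi> (d (p' i) (p' (i-1)))) = (\<Sum>i\<in>{1..n}. \<Psi> (d (p i) (p (i-1))))"
      by (rule sum.cong) (auto simp: p'_def)
    have "(\<Sum>i\<in>{1..Suc n}. \<Psi> (d (p' i) (p' (i-1)))) =
        (\<Sum>i\<in>{1..n}. \<Psi> (d (p i) (p (i-1)))) + \<Psi> (d s t)"
      using P eq sym by (simp add: p'_def partition_of_def)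
    with varF_upper[OF P', of \<Psi> d]
    show "ereal (\<Sum>i\<in>{1..n}. \<Psi> (d (p i) (p (i-1)))) + ereal (\<Psi> (d s t)) \<le> varF \<Psi> d t" by simp
  qed
  finally show ?thesis .
qed

lemma chain:
  fixes G :: "real \<Rightarrow> real"
  assumes "finite C" "C \<noteq> {}" "\<forall>x\<in>C. \<forall>y\<in>C. x < y \<longrightarrow> G x + e \<le> G y"
  shows "G (Min C) + (real (card C) - 1) * e \<le> G (Max C)"
  using assms
proof (induction "card C" arbitrary: C)
  case 0 then show ?case by simp
next
  case (Suc n)
  show ?case
  proof (cases "n = 0")
    case True
    then obtain a where "C = {a}" using Suc.hyps(2) card_1_singletonE by auto
    then show ?thesis by simp
  next
    case False
    define C' where "C' = C - {Max C}"
    have fin: "finite C'" using Suc by (simp add: C'_def)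
    have cC': "card C' = n" using Suc by (simp add: C'_def)
    have ne: "C' \<noteq> {}" using False cC' by auto
    have sub: "C' \<subseteq> C" by (auto simp: C'_def)
    have IH: "G (Min C') + (real (card C') - 1) * e \<le> G (Max C')"
      using Suc.hyps(1)[OF cC'[symmetric] fin ne] Suc.prems(3) sub by blast
    have m1: "Max C' \<in> C'" using Max_in[OF fin ne] .
    have MC'1: "Max C' \<in> C" using m1 sub by auto
    have "Max C' \<le> Max C" using MC'1 Suc.prems(1) by simp
    moreover have "Max C' \<noteq> Max C" using m1 by (auto simp: C'_def)
    ultimately have MC': "Max C' \<in> C" "Max C' < Max C" using MC'1 by auto
    have "Min C \<in> C'"
    proof -
      have "Min C \<le> Max C'" using MC'(1) Suc.prems(1) by simp
      then have "Min C \<noteq> Max C" using MC'(2) by simp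
      then show ?thesis using Min_in Suc.prems by (auto simp: C'_def)
    qed
    then have "Min C' = Min C"
      by (metis Min_antimono Min_le dual_order.antisym fin ne sub Suc.prems(1))
    moreover have "G (Max C') + e \<le> G (Max C)"
      using Suc.prems(3) MC' Max_in Suc.prems by blast
    ultimately show ?thesis using IH cC' Suc.hyps(2)[symmetric] by (simp add: algebra_simps)
  qed
qed

lemma cover_bound:
  assumes pm: "pseudo_metric_on01 d" and A: "A \<subseteq> {0..1}" and e: "0 < \<epsilon>"
    and bound: "\<And>C. finite C \<Longrightarrow> C \<subseteq> A \<Longrightarrow> (\<forall>x\<in>C. \<forall>y\<in>C. x \<noteq> y \<longrightarrow> \<epsilon> \<le> d x y) \<Longrightarrow> real (card C) \<le> B"
  shows "ereal_of_enat (cover_num A d \<epsilon>) \<le> ereal B"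
proof -
  define Sep where "Sep C \<longleftrightarrow> finite C \<and> C \<subseteq> A \<and> (\<forall>x\<in>C. \<forall>y\<in>C. x \<noteq> y \<longrightarrow> \<epsilon> \<le> d x y)" for C
  define K where "K = card ` {C. Sep C}"
  have "K \<subseteq> {..nat \<lceil>B\<rceil>}"
  proof
    fix k assume "k \<in> K"
    then obtain C where "Sep C" "k = card C" by (auto simp: K_def)
    then have "real k \<le> B" using bound by (auto simp: Sep_def)
    then have "real k \<le> real (nat \<lceil>B\<rceil>)" by linarith
    then show "k \<in> {..nat \<lceil>B\<rceil>}" by simp
  qed
  then have finK: "finite K" by (rule finite_subset) simp
  have "Sep {}" by (simp add: Sep_def)
  then have neK: "K \<noteq> {}" by (auto simp: K_def)
  have "Max K \<in> K" using Max_in[OF finK neK] .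
  then obtain C0 where C0: "Sep C0" "card C0 = Max K" by (auto simp: K_def)
  have cov: "A \<subseteq> (\<Union>c\<in>C0. {x. d c x < \<epsilon>})"
  proof
    fix x assume xA: "x \<in> A"
    show "x \<in> (\<Union>c\<in>C0. {x. d c x < \<epsilon>})"
    proof (rule ccontr)
      assume nc: "x \<notin> (\<Union>c\<in>C0. {x. d c x < \<epsilon>})"
      have x01: "x \<in> {0..1}" using xA A by auto
      have "d x x = 0" using pm x01 by (simp add: pseudo_metric_on01_def)
      then have xC: "x \<notin> C0" using nc e by auto
      have "Sep (insert x C0)"
        unfolding Sep_def
      proof (intro conjI ballI impI)
        show "finite (insert x C0)" using C0 by (simp add: Sep_def)
        show "insert x C0 \<subseteq> A" using C0 xA by (simp add: Sep_def)
        fix a b assume ab: "a \<in> insert x C0" "b \<in> insert x C0" "a \<noteq> b"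
        have C0A: "C0 \<subseteq> {0..1}" using C0 A by (auto simp: Sep_def)
        have dsym: "\<And>u. u \<in> C0 \<Longrightarrow> d x u = d u x"
          using pm x01 C0A by (auto simp: pseudo_metric_on01_def)
        have ncu: "\<And>u. u \<in> C0 \<Longrightarrow> \<epsilon> \<le> d u x" using nc by (auto simp: not_less)
        have sepC: "\<And>u v. u \<in> C0 \<Longrightarrow> v \<in> C0 \<Longrightarrow> u \<noteq> v \<Longrightarrow> \<epsilon> \<le> d u v"
          using C0(1) unfolding Sep_def by blast
        show "\<epsilon> \<le> d a b"
        proof (cases "a = x")
          case True
          then have "b \<in> C0" using ab by auto
          then show ?thesis using True ncu dsym by metis
        next
          case False
          then have aC: "a \<in> C0" using ab by auto
          show ?thesis
          proof (cases "b = x")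
            case True then show ?thesis using aC ncu by simp
          next
            case False then show ?thesis using aC ab sepC by auto
          qed
        qed
      qed
      then have "card (insert x C0) \<in> K" by (auto simp: K_def)
      then have "card (insert x C0) \<le> Max K" using finK by simp
      moreover have "card (insert x C0) = Suc (card C0)" using xC C0 by (simp add: Sep_def)
      ultimately show False using C0 by simp
    qed
  qed
  have "cover_num A d \<epsilon> \<le> enat (card C0)"
    unfolding cover_num_def
  proof (rule INF_lower)
    show "C0 \<in> {C. finite C \<and> C \<subseteq> A \<and> A \<subseteq> (\<Union>c\<in>C. {x. d c x < \<epsilon>})}"
      using C0(1) cov unfolding Sep_def by blast
  qed
  then have "ereal_of_enat (cover_num A d \<epsilon>) \<le> ereal (real (card C0))"
    using ereal_of_enat_le_iff[of "cover_num A d \<epsilon>" "enat (card C0)"] by simp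
  also have "\<dots> \<le> ereal B"
  proof -
    have "real (card C0) \<le> B" using bound C0(1) unfolding Sep_def by blast
    then show ?thesis by simp
  qed
  finally show ?thesis .
qed

theorem mainTheorem12:
  fixes d :: "real \<Rightarrow> real \<Rightarrow> real" and \<Psi> :: "real \<Rightarrow> real"
  assumes "pseudo_metric_on01 d"
    and "continuous_on {0..} \<Psi>" and "strict_mono_on {0..} \<Psi>" and "\<Psi> 0 = 0"
    and "\<forall>x\<ge>0. \<Psi> x \<ge> 0"
    and "varF \<Psi> d 1 < \<infinity>"
  shows "(\<forall>\<epsilon>. 0 < \<epsilon> \<and> ereal (\<Psi> \<epsilon>) < varF \<Psi> d 1 \<longrightarrow>
            ereal_of_enat (cover_num {0..1} d \<epsilon>)
              \<le> ereal (4 * real_of_ereal (varF \<Psi> d 1) / \<Psi> \<epsilon>))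
       \<and> (\<forall>(m::int) (j::int) \<epsilon>. 1 \<le> j \<and> 0 < \<epsilon> \<and> \<Psi> \<epsilon> < 2 powi (-m) \<longrightarrow>
            ereal_of_enat (cover_num
               {s\<in>{0..1}. ereal (real_of_int (j - 1) * 2 powi (-m)) < varF \<Psi> d s
                           \<and> varF \<Psi> d s \<le> ereal (real_of_int j * 2 powi (-m))} d \<epsilon>)
              \<le> ereal (2 powi (-m + 2) / \<Psi> \<epsilon>))"
proof -
  note pm = assms(1)
  let ?F = "varF \<Psi> d"
  have dnn: "\<And>x y. x \<in> {0..1} \<Longrightarrow> y \<in> {0..1} \<Longrightarrow> 0 \<le> d x y"
    using pm unfolding pseudo_metric_on01_def by blast
  have Pnn: "\<And>x. 0 \<le> x \<Longrightarrow> 0 \<le> \<Psi> x" using assms(5) by blast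
  have Fnn: "0 \<le> ?F s" if s: "s \<in> {0..1}" for s
  proof (cases "s = 0")
    case True then show ?thesis using varF_0 by simp
  next
    case False
    then have "?F 0 + ereal (\<Psi> (d 0 s)) \<le> ?F s" using s by (intro varF_super[OF pm]) auto
    moreover have "0 \<le> \<Psi> (d 0 s)" using Pnn dnn s by simp
    ultimately show ?thesis using varF_0[of \<Psi> d]
      by (metis add_mono ereal_less_eq(5) order_trans add_0)
  qed
  have Fle: "?F s \<le> ?F 1" if s: "s \<in> {0..1}" for s
  proof (cases "s = 1")
    case True then show ?thesis by simp
  next
    case False
    then have "?F s + ereal (\<Psi> (d s 1)) \<le> ?F 1" using s by (intro varF_super[OF pm]) auto
    moreover have "0 \<le> \<Psi> (d s 1)" using Pnn dnn s by simp
    ultimately show ?thesis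
      by (metis add_left_mono ereal_less_eq(5) order_trans add_0_right)
  qed
  have Ffin: "?F s = ereal (real_of_ereal (?F s))" if s: "s \<in> {0..1}" for s
  proof -
    have "?F s \<noteq> \<infinity>" using Fle[OF s] assms(6) by auto
    moreover have "?F s \<noteq> -\<infinity>" using Fnn[OF s] by auto
    ultimately show ?thesis by (cases "?F s") auto
  qed
  define G where "G s = real_of_ereal (?F s)" for s
  have FG: "?F s = ereal (G s)" if "s \<in> {0..1}" for s using Ffin[OF that] by (simp add: G_def)
  have Gsup: "G s + \<Psi> (d s t) \<le> G t" if "0 \<le> s" "s < t" "t \<le> 1" for s t
  proof -
    have "?F s + ereal (\<Psi> (d s t)) \<le> ?F t" using varF_super[OF pm that] .
    then show ?thesis using FG[of s] FG[of t] that by simp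
  qed
  have Gnn: "0 \<le> G s" if "s \<in> {0..1}" for s using Fnn[OF that] FG[OF that] by simp
  have Gle: "G s \<le> G 1" if "s \<in> {0..1}" for s using Fle[OF that] FG[OF that] FG[of 1] by simp
  have Pe: "0 < \<Psi> \<epsilon>" if "0 < \<epsilon>" for \<epsilon>
    using strict_mono_onD[OF assms(3), of 0 \<epsilon>] that assms(4) by simp
  have key: "ereal_of_enat (cover_num A d \<epsilon>) \<le> ereal (1 + H / \<Psi> \<epsilon>)"
    if A: "A \<subseteq> {0..1}" and e: "0 < \<epsilon>" and H: "\<forall>s\<in>A. \<forall>t\<in>A. s < t \<longrightarrow> G t - G s \<le> H"
      and H0: "0 \<le> H" for A \<epsilon> H
  proof (rule cover_bound[OF pm A e])
    fix C assume fin: "finite C" and CA: "C \<subseteq> A" and sep: "\<forall>x\<in>C. \<forall>y\<in>C. x \<noteq> y \<longrightarrow> \<epsilon> \<le> d x y"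
    have Pe': "0 < \<Psi> \<epsilon>" using Pe[OF e] .
    show "real (card C) \<le> 1 + H / \<Psi> \<epsilon>"
    proof (cases "C = {}")
      case True then show ?thesis using H0 Pe' by simp
    next
      case False
      have step: "\<forall>x\<in>C. \<forall>y\<in>C. x < y \<longrightarrow> G x + \<Psi> \<epsilon> \<le> G y"
      proof (intro ballI impI)
        fix x y assume xy: "x \<in> C" "y \<in> C" "x < y"
        have x01: "x \<in> {0..1}" "y \<in> {0..1}" using xy CA A by auto
        have "\<epsilon> \<le> d x y" using sep xy by auto
        then have "\<Psi> \<epsilon> \<le> \<Psi> (d x y)"
          using strict_mono_on_leD[OF assms(3), of \<epsilon> "d x y"] e by simp
        moreover have "G x + \<Psi> (d x y) \<le> G y" using Gsup[of x y] x01 xy by simp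
        ultimately show "G x + \<Psi> \<epsilon> \<le> G y" by simp
      qed
      have ch: "G (Min C) + (real (card C) - 1) * \<Psi> \<epsilon> \<le> G (Max C)"
        using chain[OF fin False step] .
      have "G (Max C) - G (Min C) \<le> H"
      proof (cases "Min C < Max C")
        case True then show ?thesis using H CA Min_in[OF fin False] Max_in[OF fin False] by blast
      next
        case False
        then have "Min C = Max C" using Min_le[OF fin Max_in[OF fin \<open>C \<noteq> {}\<close>]] by simp
        then show ?thesis using H0 by simp
      qed
      then have "(real (card C) - 1) * \<Psi> \<epsilon> \<le> H" using ch by simp
      then have "real (card C) - 1 \<le> H / \<Psi> \<epsilon>" using Pe' by (simp add: pos_le_divide_eq)
      then show ?thesis by simp
    qed
  qed
  show ?thesis
  proof (intro conjI allI impI)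
    fix \<epsilon> assume a: "0 < \<epsilon> \<and> ereal (\<Psi> \<epsilon>) < varF \<Psi> d 1"
    have e: "0 < \<epsilon>" using a by simp
    have lt: "\<Psi> \<epsilon> < G 1" using a FG[of 1] by simp
    have Pe': "0 < \<Psi> \<epsilon>" using Pe[OF e] .
    have "ereal_of_enat (cover_num {0..1} d \<epsilon>) \<le> ereal (1 + G 1 / \<Psi> \<epsilon>)"
    proof (rule key[of "{0..1}" \<epsilon> "G 1"])
      show "\<forall>s\<in>{0..1}. \<forall>t\<in>{0..1}. s < t \<longrightarrow> G t - G s \<le> G 1"
      proof (intro ballI impI)
        fix s t :: real assume "s \<in> {0..1}" "t \<in> {0..1}"
        then show "G t - G s \<le> G 1" using Gle[of t] Gnn[of s] by simp
      qed
    qed (use e Gnn[of 1] in auto)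
    also have "\<dots> \<le> ereal (4 * real_of_ereal (varF \<Psi> d 1) / \<Psi> \<epsilon>)"
    proof -
      have "1 < G 1 / \<Psi> \<epsilon>" using lt Pe' by (simp add: less_divide_eq)
      then have "1 + G 1 / \<Psi> \<epsilon> \<le> 4 * (G 1 / \<Psi> \<epsilon>)" by simp
      then show ?thesis by (simp add: G_def)
    qed
    finally show "ereal_of_enat (cover_num {0..1} d \<epsilon>) \<le> ereal (4 * real_of_ereal (varF \<Psi> d 1) / \<Psi> \<epsilon>)" .
  next
    fix m j :: int and \<epsilon> :: real
    assume a: "1 \<le> j \<and> 0 < \<epsilon> \<and> \<Psi> \<epsilon> < 2 powi (-m)"
    define h :: real where "h = 2 powi (-m)"
    have h0: "0 < h" by (simp add: h_def)
    have e: "0 < \<epsilon>" using a by simp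
    have Pe': "0 < \<Psi> \<epsilon>" using Pe[OF e] .
    let ?S = "{s\<in>{0..1}. ereal (real_of_int (j - 1) * 2 powi (-m)) < varF \<Psi> d s
                           \<and> varF \<Psi> d s \<le> ereal (real_of_int j * 2 powi (-m))}"
    have HS: "\<forall>s\<in>?S. \<forall>t\<in>?S. s < t \<longrightarrow> G t - G s \<le> h"
    proof (intro ballI impI)
      fix s t assume s: "s \<in> ?S" and t: "t \<in> ?S" and "s < t"
      have "real_of_int (j - 1) * h < G s" using s FG[of s] by (simp add: h_def)
      moreover have "G t \<le> real_of_int j * h" using t FG[of t] by (simp add: h_def)
      ultimately show "G t - G s \<le> h" by (simp add: algebra_simps)
    qed
    have "ereal_of_enat (cover_num ?S d \<epsilon>) \<le> ereal (1 + h / \<Psi> \<epsilon>)"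
      by (rule key[of ?S \<epsilon> h]) (use e HS h0 in auto)
    also have "\<dots> \<le> ereal (2 powi (-m + 2) / \<Psi> \<epsilon>)"
    proof -
      have p: "(2::real) powi (-m + 2) = 4 * h" 
        unfolding h_def using power_int_add[of "2::real" "-m" 2] by simp
      have "1 < h / \<Psi> \<epsilon>" using a Pe' by (simp add: less_divide_eq h_def)
      then have "1 + h / \<Psi> \<epsilon> \<le> 4 * h / \<Psi> \<epsilon>" by simp
      then show ?thesis unfolding p by simp
    qed
    finally show "ereal_of_enat (cover_num ?S d \<epsilon>) \<le> ereal (2 powi (-m + 2) / \<Psi> \<epsilon>)" .
  qed
qed

end
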